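(* There is an absolute constant $C<\infty$ such that for every $n\ge1$, $\|M_{\mathrm{Sen}(\mathcal S)}\|_{2\to2}\le C\,\|M_{\mathrm{Sen}(\mathcal N)}\|_{2\to2}$.
   Context: Let $\mathbb{I}^n=\{0,1\}^n$ with Hamming distance $d$, and $V=\mathbb{R}^{\mathbb{I}^n}$ with $\|f\|_2=(\sum_x f(x)^2)^{1/2}$. For $0\le k\le n$, $(S_kf)(x)=\binom{n}{k}^{-1}\sum_{y:\,d(x,y)=k}f(y)$. For a family $\mathcal A$ of linear operators on $V$, $(M_{\mathcal A}f)(x)=\sup_{A\in\mathcal A}(Af)(x)$. $\mathcal S=\{S_k\}_{k=0}^n$ and $\mathrm{Sen}(\mathcal S)_k=\frac{1}{k+1}\sum_{\ell=0}^kS_\ell$ for $0\le k\le n$. For real $t\ge0$, with $p=(1-e^{-t})/2$, the noise operator is $N_t=\sum_{k=0}^n\binom nk p^k(1-p)^{n-k}S_k$, and $\mathrm{Sen}(\mathcal N)=\{\mathrm{Sen}(\mathcal N)_T\}_{T\ge0}$ with $\mathrm{Sen}(\mathcal N)_T=\frac1T\int_0^TN_t\,dt$ for $T>0$ and $\mathrm{Sen}(\mathcal N)_0=N_0=$ identity (the limit as $T\downarrow0$). For a sublinear operator $M$, $\|M\|_{2\to2}=\sup_{f\ne0}\|Mf\|_2/\|f\|_2$. *)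

theory Defs
  imports "HOL-Analysis.Analysis"
begin

text \<open>The discrete cube {0,1}^n, realised as boolean lists of length n.
  Functions on the cube are functions bool list => real; only their values on
  the cube matter.\<close>

definition cube :: "nat \<Rightarrow> bool list set" where
  "cube n = {xs. length xs = n}"

definition hamming :: "bool list \<Rightarrow> bool list \<Rightarrow> nat" where
  "hamming xs ys = card {i. i < length xs \<and> xs ! i \<noteq> ys ! i}"

definition l2norm :: "nat \<Rightarrow> (bool list \<Rightarrow> real) \<Rightarrow> real" where
  "l2norm n f = sqrt (\<Sum>x\<in>cube n. (f x)^2)"

definition sph :: "nat \<Rightarrow> nat \<Rightarrow> (bool list \<Rightarrow> real) \<Rightarrow> bool list \<Rightarrow> real" where
  "sph n k f x = (\<Sum>y\<in>{y\<in>cube n. hamming x y = k}. f y) / real (n choose k)"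

definition senS :: "nat \<Rightarrow> nat \<Rightarrow> (bool list \<Rightarrow> real) \<Rightarrow> bool list \<Rightarrow> real" where
  "senS n k f x = (\<Sum>l\<le>k. sph n l f x) / real (k + 1)"

definition noise :: "nat \<Rightarrow> real \<Rightarrow> (bool list \<Rightarrow> real) \<Rightarrow> bool list \<Rightarrow> real" where
  "noise n t f x = (let p = (1 - exp (- t)) / 2 in
     \<Sum>k\<le>n. real (n choose k) * p ^ k * (1 - p) ^ (n - k) * sph n k f x)"

definition senN :: "nat \<Rightarrow> real \<Rightarrow> (bool list \<Rightarrow> real) \<Rightarrow> bool list \<Rightarrow> real" where
  "senN n T f x = (if T = 0 then f x else integral {0..T} (\<lambda>t. noise n t f x) / T)"

definition maxS :: "nat \<Rightarrow> (bool list \<Rightarrow> real) \<Rightarrow> bool list \<Rightarrow> real" where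
  "maxS n f x = (SUP k\<in>{0..n}. senS n k f x)"

definition maxN :: "nat \<Rightarrow> (bool list \<Rightarrow> real) \<Rightarrow> bool list \<Rightarrow> real" where
  "maxN n f x = (SUP T\<in>{0::real..}. senN n T f x)"

definition opnorm2 :: "nat \<Rightarrow> ((bool list \<Rightarrow> real) \<Rightarrow> bool list \<Rightarrow> real) \<Rightarrow> real" where
  "opnorm2 n M = (SUP f\<in>{f. l2norm n f \<noteq> 0}. l2norm n (M f) / l2norm n f)"

end

theory Submission
  imports Defs
begin



lemma finite_cube: "finite (cube n)"
proof -
  have "cube n = {xs. set xs \<subseteq> (UNIV::bool set) \<and> length xs = n}" by (auto simp: cube_def)
  then show ?thesis using finite_lists_length_eq[of "UNIV::bool set" n] by simp
qed

lemma card_cube: "card (cube n) = 2^n"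
proof -
  have "cube n = {xs. set xs \<subseteq> (UNIV::bool set) \<and> length xs = n}" by (auto simp: cube_def)
  then show ?thesis using card_lists_length_eq[of "UNIV::bool set" n] by simp
qed

lemma hamming_sym: "x \<in> cube n \<Longrightarrow> y \<in> cube n \<Longrightarrow> hamming x y = hamming y x"
  unfolding hamming_def cube_def by (metis (mono_tags, lifting) mem_Collect_eq)

lemma hamming_0: "x \<in> cube n \<Longrightarrow> y \<in> cube n \<Longrightarrow> hamming x y = 0 \<longleftrightarrow> x = y"
  unfolding hamming_def cube_def by (auto intro: nth_equalityI)

lemma card_sphere:
  assumes x: "x \<in> cube n"
  shows "card {y\<in>cube n. hamming x y = k} = n choose k"
proof -
  let ?S = "{y\<in>cube n. hamming x y = k}"
  let ?T = "{B. B \<subseteq> {..<n} \<and> card B = k}"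
  define \<phi> where "\<phi> y = {i. i < n \<and> x ! i \<noteq> y ! i}" for y
  have lx: "length x = n" using x by (simp add: cube_def)
  have "bij_betw \<phi> ?S ?T"
  proof (rule bij_betw_byWitness[where f' = "\<lambda>B. map (\<lambda>i. if i \<in> B then \<not> x ! i else x ! i) [0..<n]"])
    show "\<forall>a\<in>?S. map (\<lambda>i. if i \<in> \<phi> a then \<not> x ! i else x ! i) [0..<n] = a"
      by (auto simp: \<phi>_def cube_def intro!: nth_equalityI)
    show "\<forall>a'\<in>?T. \<phi> (map (\<lambda>i. if i \<in> a' then \<not> x ! i else x ! i) [0..<n]) = a'"
      by (auto simp: \<phi>_def)
    show "\<phi> ` ?S \<subseteq> ?T"
      by (auto simp: \<phi>_def hamming_def lx)
    show "(\<lambda>B. map (\<lambda>i. if i \<in> B then \<not> x ! i else x ! i) [0..<n]) ` ?T \<subseteq> ?S"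
    proof
      fix y assume "y \<in> (\<lambda>B. map (\<lambda>i. if i \<in> B then \<not> x ! i else x ! i) [0..<n]) ` ?T"
      then obtain B where B: "B \<in> ?T" and y: "y = map (\<lambda>i. if i \<in> B then \<not> x ! i else x ! i) [0..<n]" by blast
      have "{i. i < length x \<and> x ! i \<noteq> y ! i} = B" using B by (auto simp: y lx)
      then show "y \<in> ?S" using B by (auto simp: y cube_def hamming_def)
    qed
  qed
  then have "card ?S = card ?T" by (rule bij_betw_same_card)
  also have "\<dots> = n choose k" using n_subsets[of "{..<n}" k] by simp
  finally show ?thesis .
qed




lemma sph_sq_le:
  assumes x: "x \<in> cube n" and l: "l \<le> n"
  shows "(sph n l g x)^2 \<le> (\<Sum>y\<in>{y\<in>cube n. hamming x y = l}. (g y)^2) / real (n choose l)"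
proof -
  let ?S = "{y\<in>cube n. hamming x y = l}"
  have B: "real (n choose l) > 0" using l by simp
  have c: "card ?S = n choose l" using card_sphere[OF x] .
  have "(sph n l g x)^2 = (\<Sum>y\<in>?S. g y)^2 / (real (n choose l))^2"
    by (simp add: sph_def power_divide)
  also have "\<dots> \<le> ((\<Sum>y\<in>?S. (g y)^2) * real (n choose l)) / (real (n choose l))^2"
    using sum_squared_le_sum_of_squares[of g ?S] c by (intro divide_right_mono) auto
  also have "\<dots> = (\<Sum>y\<in>?S. (g y)^2) / real (n choose l)"
    using B by (simp add: power2_eq_square)
  finally show ?thesis .
qed

lemma sph_contract:
  assumes l: "l \<le> n"
  shows "l2norm n (sph n l g) \<le> l2norm n g"
proof -
  define B where "B = real (n choose l)"
  have Bp: "B > 0" using l by (simp add: B_def)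
  have "(\<Sum>x\<in>cube n. (sph n l g x)^2) \<le> (\<Sum>x\<in>cube n. (\<Sum>y\<in>{y\<in>cube n. hamming x y = l}. (g y)^2) / B)"
    using sph_sq_le[OF _ l] by (intro sum_mono) (auto simp: B_def)
  also have "\<dots> = (\<Sum>x\<in>cube n. \<Sum>y\<in>cube n. (if hamming x y = l then (g y)^2 else 0)) / B"
    by (simp add: sum_divide_distrib sum.inter_filter[OF finite_cube, symmetric])
  also have "\<dots> = (\<Sum>y\<in>cube n. \<Sum>x\<in>cube n. (if hamming x y = l then (g y)^2 else 0)) / B"
    by (subst sum.swap) simp
  also have "\<dots> = (\<Sum>y\<in>cube n. (g y)^2 * card {x\<in>cube n. hamming y x = l}) / B"
  proof -
    have "(\<Sum>x\<in>cube n. (if hamming x y = l then (g y)^2 else 0)) = (g y)^2 * card {x\<in>cube n. hamming y x = l}"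
      if y: "y \<in> cube n" for y
    proof -
      have "(\<Sum>x\<in>cube n. (if hamming x y = l then (g y)^2 else 0)) = (\<Sum>x\<in>cube n. (if hamming y x = l then (g y)^2 else 0))"
        using hamming_sym[OF _ y] by (intro sum.cong) auto
      also have "\<dots> = (\<Sum>x\<in>{x\<in>cube n. hamming y x = l}. (g y)^2)"
        by (simp only: sum.inter_filter[OF finite_cube])
      finally show ?thesis by (simp add: mult.commute)
    qed
    then show ?thesis by (intro arg_cong[where f="\<lambda>z. z / B"] sum.cong) auto
  qed
  also have "\<dots> = (\<Sum>y\<in>cube n. (g y)^2)"
    using Bp by (simp add: card_sphere B_def sum_divide_distrib)
  finally show ?thesis unfolding l2norm_def by (rule real_sqrt_le_mono)
qed




definition Abin :: "nat \<Rightarrow> nat \<Rightarrow> real \<Rightarrow> real" where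
  "Abin n l q = (\<Sum>j\<in>{Suc l..Suc n}. real (Suc n choose j) * q^j * (1-q)^(Suc n - j))"

lemma Abin_deriv_aux:
  "\<forall>l. l \<le> n \<longrightarrow> n - l = d \<longrightarrow>
     (Abin n l has_real_derivative (real (Suc n) * real (n choose l) * q^l * (1-q)^(n-l))) (at q)"
proof (induction d)
  case 0
  show ?case
  proof (intro allI impI)
    fix l assume "l \<le> n" "n - l = 0"
    then have ln: "l = n" by simp
    have "Abin n l = (\<lambda>q. q^Suc n)" unfolding Abin_def ln by (rule ext) simp
    then show "(Abin n l has_real_derivative (real (Suc n) * real (n choose l) * q^l * (1-q)^(n-l))) (at q)"
      using ln DERIV_pow[of "Suc n" q] by simp
  qed
next
  case (Suc d)
  show ?case
  proof (intro allI impI)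
    fix l assume l: "l \<le> n" "n - l = Suc d"
    define e where "e = n - Suc l"
    have e: "n - l = Suc e" "Suc n - Suc l = Suc e" using l by (auto simp: e_def)
    have IH: "(Abin n (Suc l) has_real_derivative (real (Suc n) * real (n choose Suc l) * q^Suc l * (1-q)^e)) (at q)"
    proof -
      have "Suc l \<le> n" "n - Suc l = d" using l by auto
      then show ?thesis using Suc.IH unfolding e_def by blast
    qed
    define C where "C = real (Suc n choose Suc l)"
    define B1 where "B1 = real (n choose l)"
    define B2 where "B2 = real (n choose Suc l)"
    define N where "N = real (Suc n)"
    have split: "Abin n l = (\<lambda>q. C * (q^Suc l * (1-q)^Suc e) + Abin n (Suc l) q)"
    proof (rule ext)
      fix q
      have "{Suc l..Suc n} = insert (Suc l) {Suc (Suc l)..Suc n}" using l by auto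
      then show "Abin n l q = C * (q^Suc l * (1-q)^Suc e) + Abin n (Suc l) q"
        unfolding Abin_def C_def using e by (simp add: mult.assoc)
    qed
    have b1: "real (Suc l) * C = N * B1"
      using Suc_times_binomial[of l n] unfolding C_def N_def B1_def by (metis of_nat_mult)
    have b2: "real (Suc e) * C = N * B2"
    proof -
      have "(Suc n - Suc l) * (Suc n choose Suc l) = Suc n * ((Suc n - 1) choose Suc l)"
        by (rule binomial_absorb_comp)
      then show ?thesis using e unfolding C_def N_def B2_def by (metis diff_Suc_1 of_nat_mult)
    qed
    have d1: "((\<lambda>q. q^Suc l) has_real_derivative real (Suc l) * q^l) (at q)"
      using DERIV_pow[of "Suc l" q] by simp
    have d2: "((\<lambda>q. (1-q)^Suc e) has_real_derivative - (real (Suc e) * (1-q)^e)) (at q)"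
    proof -
      have g: "((\<lambda>q. 1 - q) has_real_derivative -1) (at q)" by (auto intro!: derivative_eq_intros)
      have f: "((\<lambda>x. x^Suc e) has_real_derivative real (Suc e) * (1-q)^e) (at (1-q))"
        using DERIV_pow[of "Suc e" "1-q"] by simp
      show ?thesis using DERIV_chain2[OF f g] by simp
    qed
    have IH': "(Abin n (Suc l) has_real_derivative (N * B2 * q^Suc l * (1-q)^e)) (at q)"
      using IH unfolding N_def B2_def .
    have D: "(Abin n l has_real_derivative
       C * (real (Suc l) * q^l * (1-q)^Suc e + (- (real (Suc e) * (1-q)^e)) * q^Suc l) + N * B2 * q^Suc l * (1-q)^e) (at q)"
      unfolding split by (intro DERIV_add DERIV_cmult DERIV_mult d1 d2 IH')
    have eq: "C * (real (Suc l) * q^l * (1-q)^Suc e + (- (real (Suc e) * (1-q)^e)) * q^Suc l) + N * B2 * q^Suc l * (1-q)^e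
       = N * B1 * q^l * (1-q)^(n-l)"
    proof -
      have "C * (real (Suc l) * q^l * (1-q)^Suc e + (- (real (Suc e) * (1-q)^e)) * q^Suc l)
          = (real (Suc l) * C) * q^l * (1-q)^Suc e - (real (Suc e) * C) * q^Suc l * (1-q)^e"
        by (simp add: algebra_simps)
      also have "\<dots> = N * B1 * q^l * (1-q)^Suc e - N * B2 * q^Suc l * (1-q)^e"
        by (simp only: b1 b2)
      finally show ?thesis using e by simp
    qed
    show "(Abin n l has_real_derivative (real (Suc n) * real (n choose l) * q^l * (1-q)^(n-l))) (at q)"
      using D eq unfolding N_def B1_def by simp
  qed
qed

lemma Abin_deriv: "l \<le> n \<Longrightarrow>
     (Abin n l has_real_derivative (real (Suc n) * real (n choose l) * q^l * (1-q)^(n-l))) (at q)"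
  using Abin_deriv_aux by blast




lemma Abin_zero: "Abin n l 0 = 0"
  unfolding Abin_def by (intro sum.neutral) auto

lemma Abin_nonneg: "0 \<le> q \<Longrightarrow> q \<le> 1 \<Longrightarrow> 0 \<le> Abin n l q"
  unfolding Abin_def by (intro sum_nonneg) auto

lemma Abin_mono: "0 \<le> q \<Longrightarrow> q \<le> 1 \<Longrightarrow> l \<le> k \<Longrightarrow> Abin n k q \<le> Abin n l q"
  unfolding Abin_def by (intro sum_mono2) auto

lemma Abin_half:
  assumes kN: "16 * (k+1) \<le> Suc n" and q: "q = 4 * real (k+1) / real (Suc n)"
  shows "1/2 \<le> Abin n k q"
proof -
  define N where "N = Suc n"
  define \<beta> where "\<beta> j = real (N choose j) * q^j * (1-q)^(N-j)" for j
  have Npos: "real N > 0" by (simp add: N_def)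
  have q0: "0 \<le> q" using q by simp
  have q1: "q \<le> 1/4"
  proof -
    have "4 * real (k+1) * 4 \<le> real (Suc n)" using kN by linarith
    then show ?thesis unfolding q by (simp add: field_simps)
  qed
  have bnn: "0 \<le> \<beta> j" for j using q0 q1 by (simp add: \<beta>_def)
  have kN': "k < N" using kN by (simp add: N_def)
  have ratio: "2 * \<beta> j \<le> \<beta> (Suc j)" if j: "j \<le> k" for j
  proof -
    have jN: "j < N" using j kN' by simp
    have c1: "real (Suc j) * real (N choose Suc j) = real (N - j) * real (N choose j)"
    proof -
      have "Suc j * (N choose Suc j) = N * (n choose j)" using Suc_times_binomial[of j n] by (simp add: N_def)
      moreover have "(N - j) * (N choose j) = N * (n choose j)"
        using binomial_absorb_comp[of N j] by (simp add: N_def)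
      ultimately show ?thesis by (metis of_nat_mult)
    qed
    have e: "N - j = Suc (N - Suc j)" using jN by simp
    have key: "\<beta> (Suc j) * (real (Suc j) * (1-q)) = \<beta> j * (real (N - j) * q)"
    proof -
      have "\<beta> (Suc j) * (real (Suc j) * (1-q)) = (real (Suc j) * real (N choose Suc j)) * q^Suc j * (1-q)^(Suc (N - Suc j))"
        by (simp add: \<beta>_def algebra_simps)
      also have "\<dots> = (real (N - j) * real (N choose j)) * q^Suc j * (1-q)^(N - j)" by (simp only: c1 e)
      also have "\<dots> = \<beta> j * (real (N - j) * q)" by (simp add: \<beta>_def algebra_simps)
      finally show ?thesis .
    qed
    have big: "2 * real (Suc j) \<le> real (N - j) * q"
    proof -
      have "N \<le> 2 * (N - j)" using j kN unfolding N_def by arith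
      then have "real N \<le> 2 * real (N - j)" by (metis of_nat_le_iff of_nat_mult of_nat_numeral)
      then have h0: "real N * q \<le> (2 * real (N - j)) * q" using q0 by (rule mult_right_mono)
      define M where "M = real (N - j) * q"
      have h1: "real N * q \<le> 2 * M" using h0 unfolding M_def by (simp only: mult.assoc)
      have h3: "real N * q = 4 * real (k+1)" using Npos unfolding q N_def by simp
      have h4: "real j \<le> real k" using j by simp
      have h5: "real (Suc j) = real j + 1" "real (k+1) = real k + 1" by simp_all
      have "2 * real (Suc j) \<le> M" using h1 h3 h4 h5 by (simp add: algebra_simps)
      then show ?thesis unfolding M_def .
    qed
    have "2 * \<beta> j * (real (Suc j) * (1-q)) \<le> 2 * \<beta> j * real (Suc j)"
      using bnn[of j] q0 by (intro mult_left_mono) auto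
    also have "\<dots> = \<beta> j * (2 * real (Suc j))" by simp
    also have "\<dots> \<le> \<beta> j * (real (N - j) * q)" using big bnn[of j] by (intro mult_left_mono) (auto simp del: of_nat_diff)
    also have "\<dots> = \<beta> (Suc j) * (real (Suc j) * (1-q))" using key by simp
    finally have fin: "2 * \<beta> j * (real (Suc j) * (1-q)) \<le> \<beta> (Suc j) * (real (Suc j) * (1-q))" .
    have pos: "0 < real (Suc j) * (1-q)" using q1 by simp
    show ?thesis using mult_right_le_imp_le[OF fin pos] .
  qed
  have low: "i \<le> k \<Longrightarrow> (\<Sum>j\<le>i. \<beta> j) \<le> \<beta> (Suc i)" for i
  proof (induction i)
    case 0
    then show ?case using ratio[of 0] bnn[of 0] by simp
  next
    case (Suc i)
    then have "(\<Sum>j\<le>Suc i. \<beta> j) \<le> 2 * \<beta> (Suc i)" by simp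
    also have "\<dots> \<le> \<beta> (Suc (Suc i))" using ratio[of "Suc i"] Suc.prems by simp
    finally show ?case .
  qed
  have total: "(\<Sum>j\<le>N. \<beta> j) = 1"
    using binomial_ring[of q "1-q" N] by (simp add: \<beta>_def)
  have splitN: "{..N} = {..k} \<union> {Suc k..N}" using kN' by auto
  have "(\<Sum>j\<le>N. \<beta> j) = (\<Sum>j\<le>k. \<beta> j) + (\<Sum>j\<in>{Suc k..N}. \<beta> j)"
    unfolding splitN by (rule sum.union_disjoint) auto
  moreover have A: "(\<Sum>j\<in>{Suc k..N}. \<beta> j) = Abin n k q" by (simp add: Abin_def \<beta>_def N_def)
  moreover have "\<beta> (Suc k) \<le> (\<Sum>j\<in>{Suc k..N}. \<beta> j)"
    using kN' bnn by (intro member_le_sum) auto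
  ultimately show ?thesis using low[of k] total by linarith
qed




definition pp :: "real \<Rightarrow> real" where "pp t = (1 - exp (- t)) / 2"
definition bb :: "nat \<Rightarrow> nat \<Rightarrow> real \<Rightarrow> real" where
  "bb n l t = real (n choose l) * pp t ^ l * (1 - pp t) ^ (n - l)"

lemma noise_bb: "noise n t f x = (\<Sum>l\<le>n. bb n l t * sph n l f x)"
  unfolding noise_def bb_def pp_def Let_def by simp

lemma pp_range: "0 \<le> t \<Longrightarrow> 0 \<le> pp t \<and> pp t \<le> 1/2"
  unfolding pp_def by auto

lemma bb_nonneg: "0 \<le> t \<Longrightarrow> 0 \<le> bb n l t"
  using pp_range[of t] unfolding bb_def by auto

lemma bb_cont: "continuous_on S (bb n l)"
  unfolding bb_def pp_def by (intro continuous_intros) auto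

lemma pp_deriv: "(pp has_real_derivative exp (- t) / 2) (at t within S)"
  unfolding pp_def by (auto intro!: derivative_eq_intros)

lemma bb_integral_lower:
  assumes l: "l \<le> n" and T: "0 \<le> T"
  shows "2 * Abin n l (pp T) / real (Suc n) \<le> integral {0..T} (bb n l)"
proof -
  define N where "N = real (Suc n)"
  define \<Phi> where "\<Phi> t = Abin n l (pp t) / N" for t
  define \<Phi>' where "\<Phi>' t = bb n l t * (exp (- t) / 2)" for t
  have der: "(\<Phi> has_real_derivative \<Phi>' t) (at t within {0..T})" for t
  proof -
    have "((\<lambda>t. Abin n l (pp t)) has_real_derivative
        (real (Suc n) * real (n choose l) * pp t ^ l * (1 - pp t) ^ (n - l)) * (exp (- t) / 2)) (at t within {0..T})"
      by (rule DERIV_chain2[OF Abin_deriv[OF l] pp_deriv])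
    then have "(\<Phi> has_real_derivative
        (real (Suc n) * real (n choose l) * pp t ^ l * (1 - pp t) ^ (n - l)) * (exp (- t) / 2) / N) (at t within {0..T})"
      unfolding \<Phi>_def by (rule DERIV_cdivide)
    moreover have "(real (Suc n) * real (n choose l) * pp t ^ l * (1 - pp t) ^ (n - l)) * (exp (- t) / 2) / N = \<Phi>' t"
      unfolding \<Phi>'_def bb_def N_def by (simp add: field_simps)
    ultimately show ?thesis by simp
  qed
  have ftc: "(\<Phi>' has_integral (\<Phi> T - \<Phi> 0)) {0..T}"
    using T der by (intro fundamental_theorem_of_calculus) (auto simp: has_real_derivative_iff_has_vector_derivative[symmetric])
  have phi0: "\<Phi> 0 = 0" unfolding \<Phi>_def pp_def by (simp add: Abin_zero)
  have i1: "((\<lambda>t. 2 * \<Phi>' t) has_integral (2 * \<Phi> T)) {0..T}"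
    using has_integral_mult_right[OF ftc, of 2] phi0 by simp
  have i2: "(bb n l has_integral integral {0..T} (bb n l)) {0..T}"
    using integrable_continuous_interval[OF bb_cont] by (rule integrable_integral)
  have "2 * \<Phi> T \<le> integral {0..T} (bb n l)"
  proof (rule has_integral_le[OF i1 i2])
    fix t assume t: "t \<in> {0..T}"
    then have "0 \<le> bb n l t" by (intro bb_nonneg) auto
    moreover have "exp (- t) \<le> 1" using t by simp
    ultimately show "2 * \<Phi>' t \<le> bb n l t" unfolding \<Phi>'_def
      using mult_left_mono[of "exp (-t)" 1 "bb n l t"] by simp
  qed
  then show ?thesis unfolding \<Phi>_def N_def by simp
qed




lemma sph_nonneg: "(\<And>y. 0 \<le> g y) \<Longrightarrow> 0 \<le> sph n l g x"
  unfolding sph_def by (intro divide_nonneg_nonneg sum_nonneg) auto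

lemma senN_sum:
  assumes T: "0 < T"
  shows "senN n T g x = (\<Sum>l\<le>n. integral {0..T} (bb n l) * sph n l g x) / T"
proof -
  have "integral {0..T} (\<lambda>t. noise n t g x) = integral {0..T} (\<lambda>t. \<Sum>l\<le>n. bb n l t * sph n l g x)"
    by (simp add: noise_bb)
  also have "\<dots> = (\<Sum>l\<le>n. integral {0..T} (\<lambda>t. bb n l t * sph n l g x))"
    by (intro integral_sum integrable_continuous_interval continuous_intros bb_cont) auto
  also have "\<dots> = (\<Sum>l\<le>n. integral {0..T} (bb n l) * sph n l g x)" by simp
  finally show ?thesis using T unfolding senN_def by simp
qed

lemma T_bound:
  fixes q :: real
  assumes q0: "0 < q" and q1: "q \<le> 1/4"
  shows "0 < - ln (1 - 2*q) \<and> - ln (1 - 2*q) \<le> 4 * q"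
proof
  have a: "0 < 1 - 2*q" "1 - 2*q < 1" using q0 q1 by auto
  then show "0 < - ln (1 - 2*q)" by simp
  have "- ln (1 - 2*q) = ln (1 / (1 - 2*q))" using a by (simp add: ln_div)
  also have "\<dots> \<le> 1 / (1 - 2*q) - 1" using a by (intro ln_le_minus_one) auto
  also have "\<dots> = 2*q / (1 - 2*q)" using a by (simp add: field_simps)
  also have "\<dots> \<le> 2*q / (1/2)" using a q0 q1 by (intro divide_left_mono) auto
  finally show "- ln (1 - 2*q) \<le> 4 * q" by simp
qed

lemma domination:
  assumes g: "\<And>y. 0 \<le> g y" and k1: "1 \<le> k" and kN: "16 * (k+1) \<le> Suc n"
  shows "\<exists>T\<ge>0. senS n k g x \<le> 16 * senN n T g x"
proof -
  define N where "N = real (Suc n)"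
  define q where "q = 4 * real (k+1) / N"
  define T where "T = - ln (1 - 2*q)"
  have Npos: "0 < N" by (simp add: N_def)
  have q0: "0 < q" unfolding q_def using Npos by simp
  have q1: "q \<le> 1/4"
  proof -
    have "4 * real (k+1) * 4 \<le> N" using kN unfolding N_def by (simp add: algebra_simps)
    then show ?thesis unfolding q_def using Npos by (simp add: field_simps)
  qed
  have TT: "0 < T" "T \<le> 4*q" using T_bound[OF q0 q1] unfolding T_def by auto
  have ppT: "pp T = q"
  proof -
    have "0 < 1 - 2*q" using q1 by simp
    then show ?thesis unfolding pp_def T_def by simp
  qed
  have kn: "k \<le> n" using kN by simp
  have low: "1 / (16 * real (k+1)) \<le> integral {0..T} (bb n l) / T" if l: "l \<le> k" for l
  proof -
    have "1/2 \<le> Abin n k q" using Abin_half[OF kN] unfolding q_def N_def by simp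
    also have "\<dots> \<le> Abin n l q" using Abin_mono[OF _ _ l] q0 q1 by simp
    finally have h: "1/2 \<le> Abin n l q" .
    have "2 * Abin n l (pp T) / N \<le> integral {0..T} (bb n l)"
      using bb_integral_lower[of l n T] l kn TT unfolding N_def by simp
    then have i: "1 / N \<le> integral {0..T} (bb n l)" using h ppT Npos by (simp add: field_simps)
    have "1 / (16 * real (k+1)) = 1 / (N * (4*q))" unfolding q_def using Npos by simp
    also have "\<dots> \<le> 1 / (N * T)" using TT Npos by (intro divide_left_mono mult_left_mono mult_pos_pos) auto
    also have "\<dots> = (1 / N) / T" by simp
    also have "\<dots> \<le> integral {0..T} (bb n l) / T" using i TT by (intro divide_right_mono) auto
    finally show ?thesis .
  qed
  have inonneg: "0 \<le> integral {0..T} (bb n l)" for l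
    using TT by (intro integral_nonneg integrable_continuous_interval bb_cont bb_nonneg) auto
  have "senS n k g x = (\<Sum>l\<le>k. 1 / (16 * real (k+1)) * sph n l g x) * 16"
  proof -
    have "(\<Sum>l\<le>k. 1 / (16 * real (k+1)) * sph n l g x) = 1 / (16 * real (k+1)) * (\<Sum>l\<le>k. sph n l g x)"
      by (simp add: sum_distrib_left)
    then show ?thesis unfolding senS_def by (simp add: field_simps)
  qed
  also have "\<dots> \<le> (\<Sum>l\<le>k. integral {0..T} (bb n l) / T * sph n l g x) * 16"
    using low sph_nonneg[OF g] by (intro mult_right_mono sum_mono mult_right_mono) auto
  also have "\<dots> \<le> (\<Sum>l\<le>n. integral {0..T} (bb n l) / T * sph n l g x) * 16"
    using kn inonneg sph_nonneg[OF g] TT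
    by (intro mult_right_mono sum_mono2) (auto intro!: mult_nonneg_nonneg divide_nonneg_nonneg)
  also have "\<dots> = 16 * senN n T g x"
    using TT by (simp add: senN_sum sum_divide_distrib)
  finally have "senS n k g x \<le> 16 * senN n T g x" .
  then show ?thesis using TT(1) by (intro exI[of _ T]) auto
qed




lemma l2norm_L2: "l2norm n f = L2_set f (cube n)"
  unfolding l2norm_def L2_set_def ..

lemma l2norm_nonneg: "0 \<le> l2norm n f"
  unfolding l2norm_L2 by simp

lemma l2norm_mono: "(\<And>x. x \<in> cube n \<Longrightarrow> \<bar>f x\<bar> \<le> \<bar>g x\<bar>) \<Longrightarrow> l2norm n f \<le> l2norm n g"
  unfolding l2norm_def
  by (intro real_sqrt_le_mono sum_mono) (metis abs_ge_zero power2_abs power_mono)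

lemma l2norm_abs: "l2norm n (\<lambda>x. \<bar>f x\<bar>) = l2norm n f"
  unfolding l2norm_def by simp

lemma l2norm_triangle: "l2norm n (\<lambda>x. f x + g x) \<le> l2norm n f + l2norm n g"
  unfolding l2norm_L2 by (rule L2_set_triangle_ineq)

lemma l2norm_scale: "0 \<le> c \<Longrightarrow> l2norm n (\<lambda>x. c * f x) = c * l2norm n f"
  unfolding l2norm_L2 by (simp add: L2_set_right_distrib)

lemma l2norm_sum: "finite I \<Longrightarrow> l2norm n (\<lambda>x. \<Sum>l\<in>I. F l x) \<le> (\<Sum>l\<in>I. l2norm n (F l))"
proof (induction I rule: finite_induct)
  case empty
  then show ?case unfolding l2norm_def by simp
next
  case (insert a I)
  have "l2norm n (\<lambda>x. \<Sum>l\<in>insert a I. F l x) = l2norm n (\<lambda>x. F a x + (\<Sum>l\<in>I. F l x))"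
    using insert by simp
  also have "\<dots> \<le> l2norm n (F a) + l2norm n (\<lambda>x. \<Sum>l\<in>I. F l x)" by (rule l2norm_triangle)
  also have "\<dots> \<le> l2norm n (F a) + (\<Sum>l\<in>I. l2norm n (F l))" using insert by simp
  finally show ?case using insert by simp
qed

lemma abs_le_l2norm: "y \<in> cube n \<Longrightarrow> \<bar>f y\<bar> \<le> l2norm n f"
proof -
  assume y: "y \<in> cube n"
  have "(f y)^2 \<le> (\<Sum>x\<in>cube n. (f x)^2)"
    using y finite_cube by (intro member_le_sum) auto
  then show ?thesis unfolding l2norm_def by (metis real_sqrt_abs real_sqrt_le_mono)
qed

lemma l2norm_const_bound:
  assumes "0 \<le> c" "\<And>x. x \<in> cube n \<Longrightarrow> \<bar>h x\<bar> \<le> c"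
  shows "l2norm n h \<le> sqrt (2^n) * c"
proof -
  have "l2norm n h \<le> l2norm n (\<lambda>_. c)" using assms by (intro l2norm_mono) auto
  also have "\<dots> = sqrt (2^n) * c" unfolding l2norm_L2 L2_set_constant card_cube using assms by simp
  finally show ?thesis .
qed

definition Msum :: "nat \<Rightarrow> (bool list \<Rightarrow> real) \<Rightarrow> real" where
  "Msum n f = (\<Sum>y\<in>cube n. \<bar>f y\<bar>)"

lemma Msum_le: "Msum n f \<le> 2^n * l2norm n f"
proof -
  have "Msum n f \<le> (\<Sum>y\<in>cube n. l2norm n f)" unfolding Msum_def by (intro sum_mono abs_le_l2norm)
  also have "\<dots> = 2^n * l2norm n f" by (simp add: card_cube)
  finally show ?thesis .
qed

lemma Msum_nonneg: "0 \<le> Msum n f" unfolding Msum_def by (simp add: sum_nonneg)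

lemma sph_abs_le: "k \<le> n \<Longrightarrow> \<bar>sph n k f x\<bar> \<le> Msum n f"
proof -
  assume k: "k \<le> n"
  have B: "1 \<le> real (n choose k)" using k by (simp add: Suc_leI)
  have "\<bar>\<Sum>y\<in>{y\<in>cube n. hamming x y = k}. f y\<bar> \<le> (\<Sum>y\<in>{y\<in>cube n. hamming x y = k}. \<bar>f y\<bar>)"
    by (rule sum_abs)
  also have "\<dots> \<le> Msum n f" unfolding Msum_def using finite_cube by (intro sum_mono2) auto
  finally have h: "\<bar>\<Sum>y\<in>{y\<in>cube n. hamming x y = k}. f y\<bar> \<le> Msum n f" .
  have "\<bar>sph n k f x\<bar> = \<bar>\<Sum>y\<in>{y\<in>cube n. hamming x y = k}. f y\<bar> / real (n choose k)"
    unfolding sph_def by simp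
  also have "\<dots> \<le> \<bar>\<Sum>y\<in>{y\<in>cube n. hamming x y = k}. f y\<bar>" using B
    using divide_left_mono[OF B, of "\<bar>\<Sum>y\<in>{y\<in>cube n. hamming x y = k}. f y\<bar>"] k by simp
  finally show ?thesis using h by linarith
qed

lemma bb_sum: "(\<Sum>l\<le>n. bb n l t) = 1"
  using binomial_ring[of "pp t" "1 - pp t" n] unfolding bb_def by simp

lemma noise_abs_le: "0 \<le> t \<Longrightarrow> \<bar>noise n t f x\<bar> \<le> Msum n f"
proof -
  assume t: "0 \<le> t"
  have "\<bar>noise n t f x\<bar> \<le> (\<Sum>l\<le>n. \<bar>bb n l t * sph n l f x\<bar>)" unfolding noise_bb by (rule sum_abs)
  also have "\<dots> \<le> (\<Sum>l\<le>n. bb n l t * Msum n f)"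
    using bb_nonneg[OF t] sph_abs_le by (intro sum_mono) (auto simp: abs_mult intro: mult_left_mono)
  also have "\<dots> = Msum n f" using bb_sum by (simp add: sum_distrib_right[symmetric])
  finally show ?thesis .
qed

lemma noise_cont: "continuous_on S (\<lambda>t. noise n t f x)"
  unfolding noise_bb by (intro continuous_intros bb_cont)

lemma senN_le: "0 \<le> T \<Longrightarrow> senN n T f x \<le> \<bar>f x\<bar> + Msum n f"
proof (cases "T = 0")
  case True
  then show ?thesis using Msum_nonneg[of n f] unfolding senN_def by simp
next
  case False
  assume T: "0 \<le> T"
  then have Tp: "0 < T" using False by simp
  have "integral {0..T} (\<lambda>t. noise n t f x) \<le> integral {0..T} (\<lambda>t. Msum n f)"
    using noise_abs_le by (intro integral_le integrable_continuous_interval noise_cont continuous_intros)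
      (auto simp: abs_le_iff)
  also have "\<dots> = T * Msum n f" using T by simp
  finally have "integral {0..T} (\<lambda>t. noise n t f x) / T \<le> Msum n f"
    using Tp by (simp add: divide_le_eq mult.commute)
  then show ?thesis using False unfolding senN_def by simp
qed

lemma bdd_senN: "bdd_above ((\<lambda>T. senN n T f x) ` {0..})"
  using senN_le by (intro bdd_aboveI2[of _ _ "\<bar>f x\<bar> + Msum n f"]) auto

lemma maxN_ge: "0 \<le> T \<Longrightarrow> senN n T f x \<le> maxN n f x"
  unfolding maxN_def by (intro cSUP_upper bdd_senN) auto

lemma maxN_ge_f: "f x \<le> maxN n f x"
  using maxN_ge[of 0 n f x] unfolding senN_def by simp

lemma maxN_le: "maxN n f x \<le> \<bar>f x\<bar> + Msum n f"
  unfolding maxN_def by (intro cSUP_least senN_le) auto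

lemma maxN_abs_le: "x \<in> cube n \<Longrightarrow> \<bar>maxN n f x\<bar> \<le> (1 + 2^n) * l2norm n f"
proof -
  assume x: "x \<in> cube n"
  have "\<bar>maxN n f x\<bar> \<le> \<bar>f x\<bar> + Msum n f" using maxN_le[of n f x] maxN_ge_f[of f x n] Msum_nonneg[of n f] by (auto simp: abs_le_iff)
  also have "\<dots> \<le> l2norm n f + 2^n * l2norm n f" using abs_le_l2norm[OF x] Msum_le by (intro add_mono)
  finally show ?thesis by (simp add: algebra_simps)
qed

lemma l2norm_maxN_le: "l2norm n (maxN n f) \<le> sqrt (2^n) * ((1 + 2^n) * l2norm n f)"
  using maxN_abs_le l2norm_nonneg by (intro l2norm_const_bound) auto

lemma bdd_ratioN: "bdd_above ((\<lambda>f. l2norm n (maxN n f) / l2norm n f) ` {f. l2norm n f \<noteq> 0})"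
proof (rule bdd_aboveI2[of _ _ "sqrt (2^n) * (1 + 2^n)"])
  fix f assume "f \<in> {f. l2norm n f \<noteq> 0}"
  then have p: "0 < l2norm n f" using l2norm_nonneg[of n f] by simp
  show "l2norm n (maxN n f) / l2norm n f \<le> sqrt (2^n) * (1 + 2^n)"
    using l2norm_maxN_le[of n f] p by (simp add: divide_le_eq mult.assoc)
qed

lemma maxN_opnorm: "l2norm n (maxN n f) \<le> opnorm2 n (maxN n) * l2norm n f"
proof (cases "l2norm n f = 0")
  case True
  have "l2norm n (maxN n f) \<le> sqrt (2^n) * ((1 + 2^n) * l2norm n f)" by (rule l2norm_maxN_le)
  then show ?thesis using True by simp
next
  case False
  then have p: "0 < l2norm n f" using l2norm_nonneg[of n f] by simp
  have "l2norm n (maxN n f) / l2norm n f \<le> opnorm2 n (maxN n)"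
    unfolding opnorm2_def using False by (intro cSUP_upper bdd_ratioN) auto
  then show ?thesis using p by (simp add: divide_le_eq)
qed

lemma l2norm_one_pos: "0 < l2norm n (\<lambda>_. 1)"
  unfolding l2norm_L2 L2_set_constant card_cube by simp

lemma opnorm_maxN_ge1: "1 \<le> opnorm2 n (maxN n)"
proof -
  let ?f = "\<lambda>_::bool list. 1::real"
  have "l2norm n ?f \<le> l2norm n (maxN n ?f)"
    using maxN_ge_f[of ?f] by (intro l2norm_mono) (smt (verit))
  then have "1 \<le> l2norm n (maxN n ?f) / l2norm n ?f" using l2norm_one_pos[of n] by simp
  also have "\<dots> \<le> opnorm2 n (maxN n)"
    unfolding opnorm2_def using l2norm_one_pos[of n] by (intro cSUP_upper bdd_ratioN) auto
  finally show ?thesis .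
qed




lemma sph0: "x \<in> cube n \<Longrightarrow> sph n 0 f x = f x"
proof -
  assume x: "x \<in> cube n"
  have "{y\<in>cube n. hamming x y = 0} = {x}" using x hamming_0[OF x] by auto
  then show ?thesis unfolding sph_def by simp
qed

lemma senS0: "x \<in> cube n \<Longrightarrow> senS n 0 f x = f x"
  unfolding senS_def by (simp add: sph0)

lemma maxS_ge: "k \<le> n \<Longrightarrow> senS n k f x \<le> maxS n f x"
  unfolding maxS_def by (intro cSUP_upper bdd_above_finite) auto

lemma sph_mono: "(\<And>y. f y \<le> g y) \<Longrightarrow> sph n l f x \<le> sph n l g x"
  unfolding sph_def by (intro divide_right_mono sum_mono) auto

lemma senS_mono: "(\<And>y. f y \<le> g y) \<Longrightarrow> senS n k f x \<le> senS n k g x"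
  unfolding senS_def by (intro divide_right_mono sum_mono sph_mono) auto

lemma maxS_abs: "x \<in> cube n \<Longrightarrow> \<bar>maxS n f x\<bar> \<le> maxS n (\<lambda>y. \<bar>f y\<bar>) x"
proof -
  assume x: "x \<in> cube n"
  have up: "maxS n f x \<le> maxS n (\<lambda>y. \<bar>f y\<bar>) x"
    unfolding maxS_def[of n f]
  proof (rule cSUP_least)
    show "{0..n} \<noteq> {}" by simp
    fix k assume "k \<in> {0..n}"
    then have "senS n k (\<lambda>y. \<bar>f y\<bar>) x \<le> maxS n (\<lambda>y. \<bar>f y\<bar>) x" by (intro maxS_ge) auto
    moreover have "senS n k f x \<le> senS n k (\<lambda>y. \<bar>f y\<bar>) x" by (intro senS_mono) auto
    ultimately show "senS n k f x \<le> maxS n (\<lambda>y. \<bar>f y\<bar>) x" by linarith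
  qed
  have "f x \<le> maxS n f x" using maxS_ge[of 0 n f x] senS0[OF x] by simp
  moreover have "\<bar>f x\<bar> \<le> maxS n (\<lambda>y. \<bar>f y\<bar>) x" using maxS_ge[of 0 n "\<lambda>y. \<bar>f y\<bar>" x] senS0[OF x, of "\<lambda>y. \<bar>f y\<bar>"] by simp
  ultimately show ?thesis using up by linarith
qed

definition mm :: "nat \<Rightarrow> nat" where "mm n = Suc n div 16 - 1"

definition tail :: "nat \<Rightarrow> (bool list \<Rightarrow> real) \<Rightarrow> bool list \<Rightarrow> real" where
  "tail n g x = (\<Sum>l\<le>n. sph n l g x) / real (mm n + 2)"

lemma mm_le: "mm n \<le> n" unfolding mm_def by simp

lemma small_k:
  assumes g: "\<And>y. 0 \<le> g y" and x: "x \<in> cube n" and k: "k \<le> mm n"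
  shows "senS n k g x \<le> 16 * maxN n g x"
proof (cases "k = 0")
  case True
  then show ?thesis using senS0[OF x, of g] maxN_ge_f[of g x n] g[of x] by simp
next
  case False
  have kN: "16 * (k+1) \<le> Suc n"
  proof -
    have "Suc n div 16 \<ge> 1" using False k unfolding mm_def by simp
    then have "k + 1 \<le> Suc n div 16" using k unfolding mm_def by simp
    moreover have "16 * (Suc n div 16) \<le> Suc n" by simp
    ultimately show ?thesis by (meson le_trans mult_le_mono2)
  qed
  obtain T where T: "T \<ge> 0" "senS n k g x \<le> 16 * senN n T g x"
    using domination[where g=g and x=x, OF g _ kN] False by auto
  then show ?thesis using maxN_ge[OF T(1), of n g x] by linarith
qed

lemma tail_nonneg: "(\<And>y. 0 \<le> g y) \<Longrightarrow> 0 \<le> tail n g x"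
  unfolding tail_def by (intro divide_nonneg_nonneg sum_nonneg sph_nonneg) auto

lemma all_k:
  assumes g: "\<And>y. 0 \<le> g y" and x: "x \<in> cube n" and k: "k \<le> n"
  shows "senS n k g x \<le> 16 * maxN n g x + tail n g x"
proof (cases "k \<le> mm n")
  case True
  then show ?thesis using small_k[where g=g, OF g x True] tail_nonneg[of g n x, OF g] by linarith
next
  case False
  define m where "m = mm n"
  have mk: "m < k" using False by (simp add: m_def)
  have s: "\<And>l. 0 \<le> sph n l g x" using sph_nonneg[OF g] .
  have split: "{..k} = {..m} \<union> {Suc m..k}" using mk by auto
  have "(\<Sum>l\<le>k. sph n l g x) = (\<Sum>l\<le>m. sph n l g x) + (\<Sum>l\<in>{Suc m..k}. sph n l g x)"
    unfolding split by (rule sum.union_disjoint) auto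
  then have "senS n k g x = (\<Sum>l\<le>m. sph n l g x) / real (k+1) + (\<Sum>l\<in>{Suc m..k}. sph n l g x) / real (k+1)"
    unfolding senS_def by (simp add: add_divide_distrib)
  also have "\<dots> \<le> (\<Sum>l\<le>m. sph n l g x) / real (m+1) + (\<Sum>l\<le>n. sph n l g x) / real (m+2)"
  proof (rule add_mono)
    show "(\<Sum>l\<le>m. sph n l g x) / real (k+1) \<le> (\<Sum>l\<le>m. sph n l g x) / real (m+1)"
      using mk s by (intro divide_left_mono sum_nonneg) auto
    have "(\<Sum>l\<in>{Suc m..k}. sph n l g x) \<le> (\<Sum>l\<le>n. sph n l g x)"
      using k s by (intro sum_mono2) auto
    moreover have "0 \<le> (\<Sum>l\<in>{Suc m..k}. sph n l g x)" using s by (intro sum_nonneg) auto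
    ultimately show "(\<Sum>l\<in>{Suc m..k}. sph n l g x) / real (k+1) \<le> (\<Sum>l\<le>n. sph n l g x) / real (m+2)"
      using mk by (intro frac_le) auto
  qed
  also have "\<dots> = senS n m g x + tail n g x" unfolding senS_def tail_def m_def by simp
  also have "\<dots> \<le> 16 * maxN n g x + tail n g x"
    using small_k[OF g x, of m] by (simp add: m_def)
  finally show ?thesis .
qed

lemma maxS_le:
  assumes g: "\<And>y. 0 \<le> g y" and x: "x \<in> cube n"
  shows "maxS n g x \<le> 16 * maxN n g x + tail n g x"
  unfolding maxS_def by (intro cSUP_least all_k[OF g x]) auto

lemma tail_l2: "l2norm n (tail n g) \<le> 16 * l2norm n g"
proof -
  define c where "c = 1 / real (mm n + 2)"
  have c0: "0 \<le> c" by (simp add: c_def)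
  have "l2norm n (tail n g) = l2norm n (\<lambda>x. c * (\<Sum>l\<le>n. sph n l g x))"
    unfolding tail_def c_def by simp
  also have "\<dots> = c * l2norm n (\<lambda>x. \<Sum>l\<le>n. sph n l g x)" using c0 by (rule l2norm_scale)
  also have "\<dots> \<le> c * (\<Sum>l\<le>n. l2norm n (sph n l g))"
    using c0 by (intro mult_left_mono l2norm_sum) auto
  also have "\<dots> \<le> c * (\<Sum>l\<le>n. l2norm n g)"
    using c0 by (intro mult_left_mono sum_mono sph_contract) auto
  also have "\<dots> = (real (Suc n) / real (mm n + 2)) * l2norm n g" by (simp add: c_def)
  also have "\<dots> \<le> 16 * l2norm n g"
  proof (rule mult_right_mono[OF _ l2norm_nonneg])
    have "Suc n div 16 + 1 \<le> mm n + 2" unfolding mm_def by simp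
    moreover have "Suc n \<le> 16 * (Suc n div 16 + 1)" by simp
    ultimately have "Suc n \<le> 16 * (mm n + 2)" by (meson le_trans mult_le_mono2)
    then have "real (Suc n) \<le> 16 * real (mm n + 2)" by (metis of_nat_le_iff of_nat_mult of_nat_numeral)
    then show "real (Suc n) / real (mm n + 2) \<le> 16" by (simp add: divide_le_eq)
  qed
  finally show ?thesis .
qed

lemma maxS_l2:
  "l2norm n (maxS n f) \<le> 32 * opnorm2 n (maxN n) * l2norm n f"
proof -
  define g where "g y = \<bar>f y\<bar>" for y
  have g0: "\<And>y. 0 \<le> g y" by (simp add: g_def)
  have "l2norm n (maxS n f) \<le> l2norm n (\<lambda>x. 16 * maxN n g x + tail n g x)"
  proof (rule l2norm_mono)
    fix x assume x: "x \<in> cube n"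
    have "\<bar>maxS n f x\<bar> \<le> maxS n g x" using maxS_abs[OF x, of f] unfolding g_def by simp
    also have "\<dots> \<le> 16 * maxN n g x + tail n g x" by (rule maxS_le[OF g0 x])
    finally show "\<bar>maxS n f x\<bar> \<le> \<bar>16 * maxN n g x + tail n g x\<bar>" by simp
  qed
  also have "\<dots> \<le> l2norm n (\<lambda>x. 16 * maxN n g x) + l2norm n (tail n g)" by (rule l2norm_triangle)
  also have "\<dots> = 16 * l2norm n (maxN n g) + l2norm n (tail n g)" by (simp add: l2norm_scale)
  also have "\<dots> \<le> 16 * (opnorm2 n (maxN n) * l2norm n g) + 16 * l2norm n g"
    using maxN_opnorm tail_l2 by (intro add_mono mult_left_mono) auto
  also have "\<dots> \<le> 16 * (opnorm2 n (maxN n) * l2norm n g) + 16 * (opnorm2 n (maxN n) * l2norm n g)"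
    using mult_right_mono[OF opnorm_maxN_ge1[of n] l2norm_nonneg[of n g]] opnorm_maxN_ge1[of n]
    by (intro add_mono mult_left_mono) auto
  also have "\<dots> = 32 * opnorm2 n (maxN n) * l2norm n f"
    using l2norm_abs[of n f] unfolding g_def by simp
  finally show ?thesis .
qed

theorem proposition2:
  shows "\<exists>C::real. \<forall>n::nat. n \<ge> 1 \<longrightarrow> opnorm2 n (maxS n) \<le> C * opnorm2 n (maxN n)"
proof (intro exI[of _ 32] allI impI)
  fix n :: nat
  show "opnorm2 n (maxS n) \<le> 32 * opnorm2 n (maxN n)"
    unfolding opnorm2_def[of n "maxS n"]
  proof (rule cSUP_least)
    show "{f. l2norm n f \<noteq> 0} \<noteq> {}" using l2norm_one_pos[of n] by force
    fix f assume "f \<in> {f. l2norm n f \<noteq> 0}"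
    then have p: "0 < l2norm n f" using l2norm_nonneg[of n f] by simp
    show "l2norm n (maxS n f) / l2norm n f \<le> 32 * opnorm2 n (maxN n)"
      using maxS_l2[of n f] p by (simp add: divide_le_eq)
  qed
qed


end
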